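(* In the one-way trading setting with price elasticity, let $\pi\ge1$. For every input $\sigma=(g_1,\dots,g_T)$ and every $t\in[T]$, the output of CR-Pursuit($\pi$) satisfies $$\bar v_t\ \le\ c\,\frac{g_t(\bar v_t)}{p(t)},\qquad c=\frac{2}{1+\sqrt{1-1/\pi}}.$$
   Context: Fix $\Delta>0$, $0<m\le M$. Let $\mathcal G_{PE}$ be the set of functions $g(v)=(p-f(v))\,v$ on $[0,\Delta]$, where $p\in[m,M]$ and $f:[0,\Delta]\to[0,\infty)$ is convex and differentiable with $f(0)=0$ (so $g$ is concave, $g(0)=0$, $g'(0)=p$; $g$ need not be increasing). An input is a finite sequence $\sigma=(g_1,\dots,g_T)$ with $g_t(v)=(p(t)-f_t(v))v\in\mathcal G_{PE}$; $\sigma^{[1:t]}=(g_1,\dots,g_t)$ ($\sigma^{[1:0]}$ empty). $\eta_{OPT}(\sigma^{[1:t]})$ is the optimal value of $\max\sum_{s=1}^t g_s(v_s)$ s.t. $\sum_{s=1}^t v_s\le\Delta$, $v_s\ge0$ (and $0$ for the empty sequence). For $\pi\ge1$, CR-Pursuit($\pi$) outputs at time $t$ the smallest $\bar v_t\in[0,\Delta]$ with $g_t(\bar v_t)=\frac1\pi\big[\eta_{OPT}(\sigma^{[1:t]})-\eta_{OPT}(\sigma^{[1:t-1]})\big]$ (such a value exists since the right side lies between $0$ and $\max_{[0,\Delta]}g_t$). *)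

theory Defs
  imports "HOL-Analysis.Analysis"
begin

text \<open>Membership of g(v) = (p - f v) v in G_PE, described by the pair (p, f).\<close>
definition in_GPE :: "real \<Rightarrow> real \<Rightarrow> real \<Rightarrow> real \<Rightarrow> (real \<Rightarrow> real) \<Rightarrow> bool" where
  "in_GPE \<Delta> m M p f \<longleftrightarrow> m \<le> p \<and> p \<le> M \<and> convex_on {0..\<Delta>} f \<and>
      f differentiable_on {0..\<Delta>} \<and> f 0 = 0 \<and> (\<forall>v\<in>{0..\<Delta>}. 0 \<le> f v)"

definition gPE :: "real \<Rightarrow> (real \<Rightarrow> real) \<Rightarrow> real \<Rightarrow> real" where
  "gPE p f v = (p - f v) * v"

text \<open>Offline optimum on the prefix g_1..g_t (t = 0: empty prefix, value 0).\<close>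
definition eta_OPT :: "real \<Rightarrow> (nat \<Rightarrow> real \<Rightarrow> real) \<Rightarrow> nat \<Rightarrow> real" where
  "eta_OPT \<Delta> g t = Sup {(\<Sum>s=1..t. g s (v s)) | v :: nat \<Rightarrow> real.
       (\<forall>s\<in>{1..t}. 0 \<le> v s) \<and> (\<Sum>s=1..t. v s) \<le> \<Delta>}"

definition cr_pursuit :: "real \<Rightarrow> real \<Rightarrow> (nat \<Rightarrow> real \<Rightarrow> real) \<Rightarrow> nat \<Rightarrow> real" where
  "cr_pursuit \<Delta> \<pi> g t = (LEAST v. v \<in> {0..\<Delta>} \<and>
       g t v = (eta_OPT \<Delta> g t - eta_OPT \<Delta> g (t - 1)) / \<pi>)"

end

theory Submission imports Defs begin

abbreviation feas :: "real \<Rightarrow> nat \<Rightarrow> (nat \<Rightarrow> real) \<Rightarrow> bool" where "feas \<Delta> n v \<equiv> (\<forall>s\<in>{1..n}. 0 \<le> v s) \<and> (\<Sum>s=1..n. v s) \<le> (\<Delta>::real)"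

lemma feas_le:
  assumes "feas \<Delta> n v" "s \<in> {1..n}" shows "v s \<le> \<Delta>"
proof -
  have "v s \<le> (\<Sum>s=1..n. v s)"
    by (rule member_le_sum) (use assms in auto)
  thus ?thesis using assms by linarith
qed

lemma eta_bdd:
  assumes "\<forall>s\<in>{1..n}. \<forall>x\<in>{0..\<Delta>}. g s x \<le> K * x" "K \<ge> 0"
  shows "bdd_above {(\<Sum>s=1..n. g s (v s)) | v :: nat \<Rightarrow> real. (\<forall>s\<in>{1..n}. 0 \<le> v s) \<and> (\<Sum>s=1..n. v s) \<le> \<Delta>}"
proof (rule bdd_aboveI[where M="K*\<Delta>"])
  fix x assume "x \<in> {(\<Sum>s=1..n. g s (v s)) | v :: nat \<Rightarrow> real. (\<forall>s\<in>{1..n}. 0 \<le> v s) \<and> (\<Sum>s=1..n. v s) \<le> \<Delta>}"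
  then obtain v where x: "x = (\<Sum>s=1..n. g s (v s))" and fv: "feas \<Delta> n v" by blast
  have "x \<le> (\<Sum>s=1..n. K * v s)" unfolding x
    by (rule sum_mono) (use assms fv feas_le[OF fv] in auto)
  also have "\<dots> = K * (\<Sum>s=1..n. v s)" by (simp add: sum_distrib_left)
  also have "\<dots> \<le> K * \<Delta>" using fv assms(2) by (simp add: mult_left_mono)
  finally show "x \<le> K * \<Delta>" .
qed

lemma eta_mono:
  assumes "\<Delta> \<ge> 0" "g (Suc k) 0 = 0"
    and "\<forall>s\<in>{1..Suc k}. \<forall>x\<in>{0..\<Delta>}. g s x \<le> K * x" "K \<ge> 0"
  shows "eta_OPT \<Delta> g k \<le> eta_OPT \<Delta> g (Suc k)"
  unfolding eta_OPT_def
proof (rule cSup_mono)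
  show "{(\<Sum>s=1..k. g s (v s)) | v :: nat \<Rightarrow> real. feas \<Delta> k v} \<noteq> {}"
    using assms(1) by (auto intro!: exI[of _ "\<lambda>_. 0"])
  show "bdd_above {(\<Sum>s=1..Suc k. g s (v s)) | v :: nat \<Rightarrow> real. feas \<Delta> (Suc k) v}"
    by (rule eta_bdd[OF assms(3,4)])
  fix b assume "b \<in> {(\<Sum>s=1..k. g s (v s)) | v :: nat \<Rightarrow> real. feas \<Delta> k v}"
  then obtain v where b: "b = (\<Sum>s=1..k. g s (v s))" and fv: "feas \<Delta> k v" by blast
  define v' where "v' = v(Suc k := 0)"
  have e1: "(\<Sum>s=1..k. g s (v' s)) = (\<Sum>s=1..k. g s (v s))"
    by (rule sum.cong) (auto simp: v'_def)
  have e2: "(\<Sum>s=1..k. v' s) = (\<Sum>s=1..k. v s)"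
    by (rule sum.cong) (auto simp: v'_def)
  have "feas \<Delta> (Suc k) v'" using fv e2 by (auto simp: v'_def sum.cl_ivl_Suc le_Suc_eq)
  moreover have "b = (\<Sum>s=1..Suc k. g s (v' s))" using e1 b assms(2) by (simp add: sum.cl_ivl_Suc v'_def)
  ultimately show "\<exists>a\<in>{(\<Sum>s=1..Suc k. g s (v s)) | v :: nat \<Rightarrow> real. feas \<Delta> (Suc k) v}. b \<le> a"
    by blast
qed

lemma eta_step:
  assumes "\<Delta> \<ge> 0" "\<forall>x\<in>{0..\<Delta>}. g (Suc k) x \<le> B"
    and "\<forall>s\<in>{1..k}. \<forall>x\<in>{0..\<Delta>}. g s x \<le> K * x" "K \<ge> 0"
  shows "eta_OPT \<Delta> g (Suc k) \<le> eta_OPT \<Delta> g k + B"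
  unfolding eta_OPT_def
proof (rule cSup_least)
  show "{(\<Sum>s=1..Suc k. g s (v s)) | v :: nat \<Rightarrow> real. feas \<Delta> (Suc k) v} \<noteq> {}"
    using assms(1) by (auto intro!: exI[of _ "\<lambda>_. 0"])
  fix x assume "x \<in> {(\<Sum>s=1..Suc k. g s (v s)) | v :: nat \<Rightarrow> real. feas \<Delta> (Suc k) v}"
  then obtain v where x: "x = (\<Sum>s=1..Suc k. g s (v s))" and fv: "feas \<Delta> (Suc k) v" by blast
  have nn: "0 \<le> (\<Sum>s=1..k. v s)" using fv by (intro sum_nonneg) auto
  have "0 \<le> v (Suc k)" using fv by auto
  moreover have "(\<Sum>s=1..k. v s) + v (Suc k) \<le> \<Delta>" using fv by (simp add: sum.cl_ivl_Suc)
  ultimately have "(\<Sum>s=1..k. v s) \<le> \<Delta>" by linarith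
  hence fk: "feas \<Delta> k v" using fv by auto
  have "(\<Sum>s=1..k. g s (v s)) \<le> Sup {(\<Sum>s=1..k. g s (v s)) | v :: nat \<Rightarrow> real. feas \<Delta> k v}"
    by (rule cSup_upper) (use fk eta_bdd[OF assms(3,4)] in auto)
  moreover have "g (Suc k) (v (Suc k)) \<le> B"
    using assms(2) feas_le[OF fv, of "Suc k"] fv by auto
  ultimately show "x \<le> Sup {(\<Sum>s=1..k. g s (v s)) | v :: nat \<Rightarrow> real. feas \<Delta> k v} + B"
    using x by (simp add: sum.cl_ivl_Suc)
qed

lemma single:
  fixes \<Delta> p \<pi> Y z0 :: real and f :: "real \<Rightarrow> real"
  assumes \<Delta>: "\<Delta> > 0" and p: "p > 0" and \<pi>: "\<pi> \<ge> 1"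
    and cvx: "convex_on {0..\<Delta>} f" and cont: "continuous_on {0..\<Delta>} f" and f0: "f 0 = 0"
    and fnn: "\<forall>v\<in>{0..\<Delta>}. 0 \<le> f v"
    and Y: "0 \<le> Y" and z0: "z0 \<in> {0..\<Delta>}" and big: "\<pi> * Y \<le> gPE p f z0"
  shows "(LEAST v. v \<in> {0..\<Delta>} \<and> gPE p f v = Y)
     \<le> (2 / (1 + sqrt (1 - 1 / \<pi>))) * gPE p f (LEAST v. v \<in> {0..\<Delta>} \<and> gPE p f v = Y) / p"
proof -
  define g where "g = gPE p f"
  have gc: "continuous_on {0..\<Delta>} g" unfolding g_def gPE_def
    by (intro continuous_intros cont)
  have g0: "g 0 = 0" by (simp add: g_def gPE_def)
  have gsub: "continuous_on {0..b} g" if "b \<le> \<Delta>" for b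
    using continuous_on_subset[OF gc] that by auto
  have "1 * Y \<le> \<pi> * Y" using Y \<pi> by (intro mult_right_mono) auto
  hence Yle: "Y \<le> g z0" using big unfolding g_def by simp
  obtain z1 where z1: "0 \<le> z1" "z1 \<le> z0" "g z1 = Y"
    using IVT'[of g 0 Y z0] g0 Y Yle z0 gsub[of z0] by auto
  define S where "S = {v\<in>{0..\<Delta>}. g v = Y}"
  have "z1 \<in> S" using z1 z0 unfolding S_def by auto
  hence Sne: "S \<noteq> {}" by auto
  have "S = {0..\<Delta>} \<inter> g -` {Y}" unfolding S_def by auto
  hence Scl: "closed S" using continuous_closed_preimage[OF gc] by auto
  have Sbd: "bdd_below S" unfolding S_def by (rule bdd_belowI[of _ 0]) auto
  define vb where "vb = Inf S"
  have vbS: "vb \<in> S" unfolding vb_def by (rule closed_contains_Inf[OF Sne Sbd Scl])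
  have vbl: "vb \<le> v" if "v \<in> S" for v unfolding vb_def by (rule cInf_lower[OF that Sbd])
  have L: "(LEAST v. v \<in> {0..\<Delta>} \<and> gPE p f v = Y) = vb"
    by (rule Least_equality) (use vbS vbl in \<open>auto simp: S_def g_def\<close>)
  have vb0: "0 \<le> vb" "vb \<le> \<Delta>" "g vb = Y" using vbS by (auto simp: S_def)
  have below: "g w \<le> Y" if wh: "0 \<le> w" "w < vb" for w
  proof (rule ccontr)
    assume "\<not> g w \<le> Y"
    moreover have "w \<le> \<Delta>" using that vb0 by auto
    ultimately obtain x where "0 \<le> x" "x \<le> w" "g x = Y"
      using IVT'[of g 0 Y w] g0 Y wh gsub[of w] by auto
    hence "x \<in> S" using that vb0 by (auto simp: S_def)
    thus False using vbl[of x] \<open>x \<le> w\<close> that by auto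
  qed
  define s where "s = sqrt (1 - 1 / \<pi>)"
  have s0: "0 \<le> s" "s \<le> 1" using \<pi> by (auto simp: s_def)
  have s2: "s^2 = 1 - 1/\<pi>" using \<pi> by (simp add: s_def)
  have c1: "1 \<le> 2 / (1 + s)" using s0 by (simp add: field_simps)
  have goal: "vb \<le> (2 / (1 + s)) * g vb / p"
  proof (cases "Y = 0")
    case True
    hence "0 \<in> S" using g0 \<Delta> by (auto simp: S_def)
    hence "vb = 0" using vbl vb0 by fastforce
    thus ?thesis by (simp add: g0)
  next
    case False
    hence Ypos: "Y > 0" using Y by auto
    have vbpos: "vb > 0" using vb0 g0 Ypos by (cases "vb = 0") auto
    define F where "F = f vb"
    have F0: "F \<ge> 0" using fnn vb0 by (auto simp: F_def)
    have gvb: "g vb = (p - F) * vb" by (simp add: g_def gPE_def F_def)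
    show ?thesis
    proof (cases "F = 0")
      case True
      have "vb \<le> (2 / (1 + s)) * vb" using mult_right_mono[OF c1, of vb] vbpos by simp
      thus ?thesis using True gvb p by simp
    next
      case False
      hence Fpos: "F > 0" using F0 by auto
      have fw: "f w \<le> w / vb * F" if "0 \<le> w" "w \<le> vb" for w
      proof -
        have "f ((1 - w/vb) *\<^sub>R 0 + (w/vb) *\<^sub>R vb) \<le> (1 - w/vb) * f 0 + (w/vb) * f vb"
          by (rule convex_onD[OF cvx]) (use that vbpos vb0 in auto)
        thus ?thesis using vbpos f0 by (simp add: F_def)
      qed
      have fz: "z / vb * F \<le> f z" if "vb \<le> z" "z \<le> \<Delta>" for z
      proof -
        have zp: "z > 0" using that vbpos by auto
        have "f ((1 - vb/z) *\<^sub>R 0 + (vb/z) *\<^sub>R z) \<le> (1 - vb/z) * f 0 + (vb/z) * f z"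
          by (rule convex_onD[OF cvx]) (use that vbpos zp in auto)
        hence "F \<le> vb / z * f z" using zp f0 by (simp add: F_def)
        hence "z * F \<le> vb * f z" using zp by (simp add: field_simps)
        thus ?thesis using vbpos by (simp add: field_simps)
      qed
      have hp: "2 * F \<le> p"
      proof (rule ccontr)
        assume "\<not> 2 * F \<le> p"
        define w where "w = vb * p / (2 * F)"
        have w: "0 \<le> w" "w < vb" using vbpos p Fpos \<open>\<not> 2 * F \<le> p\<close>
          by (auto simp: w_def field_simps)
        have "(p - w / vb * F) * w \<le> g w"
          using fw[of w] w by (auto simp: g_def gPE_def intro!: mult_right_mono)
        also have "\<dots> \<le> (p - F) * vb" using below[OF w] Ypos vb0 gvb by simp
        finally have "(p - w / vb * F) * w \<le> (p - F) * vb" .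
        hence "p^2 * vb / (4*F) \<le> (p - F) * vb" using vbpos Fpos
          by (simp add: w_def field_simps power2_eq_square)
        hence "vb * p^2 \<le> vb * (4 * F * (p - F))" using vbpos Fpos by (simp add: field_simps)
        hence "p^2 \<le> 4 * F * (p - F)" using vbpos by (simp add: mult_le_cancel_left_pos)
        hence "(p - 2*F)^2 \<le> 0" by (simp add: power2_eq_square algebra_simps)
        hence "p = 2 * F" by simp
        thus False using \<open>\<not> 2 * F \<le> p\<close> by simp
      qed
      have amgm: "(p - z / vb * F) * z \<le> p^2 * vb / (4 * F)" for z
      proof -
        have "0 \<le> (p - 2 * F * z / vb)^2" by simp
        hence "4 * F / vb * ((p - z / vb * F) * z) \<le> p^2" using vbpos
          by (simp add: power2_eq_square field_simps)
        thus ?thesis using vbpos Fpos by (simp add: field_simps)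
      qed
      have hG: "g z0 \<le> p^2 * vb / (4 * F)"
      proof (cases "z0 < vb")
        case True
        hence "g z0 \<le> (p - F) * vb" using below[of z0] z0 gvb vb0 by auto
        also have "\<dots> \<le> p^2 * vb / (4 * F)" using amgm[of vb] vbpos by simp
        finally show ?thesis .
      next
        case False
        have "g z0 \<le> (p - z0 / vb * F) * z0"
          using fz[of z0] False z0 by (auto simp: g_def gPE_def intro!: mult_right_mono)
        thus ?thesis using amgm[of z0] by linarith
      qed
      have "\<pi> * ((p - F) * vb) \<le> p^2 * vb / (4 * F)"
        using big hG gvb vb0 unfolding g_def by simp
      hence "vb * (\<pi> * (p - F) * (4 * F)) \<le> vb * p^2" using vbpos Fpos by (simp add: field_simps)
      hence "\<pi> * (p - F) * (4 * F) \<le> p^2" using vbpos by (simp add: mult_le_cancel_left_pos)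
      hence k1: "4 * F * (p - F) \<le> p^2 / \<pi>" using \<pi> by (simp add: field_simps)
      have q1: "(p * s)^2 = p^2 - p^2 / \<pi>" by (simp add: power_mult_distrib s2 right_diff_distrib)
      have q2: "(p - 2 * F)^2 = p^2 - 4 * F * (p - F)" by (simp add: power2_eq_square algebra_simps)
      have "(p * s)^2 \<le> (p - 2 * F)^2" unfolding q1 q2 using k1 by linarith
      hence ps: "p * s \<le> p - 2 * F"
        by (rule power2_le_imp_le) (use hp in linarith)
      have "vb * p \<le> 2 / (1 + s) * ((p - F) * vb)"
      proof -
        have "(1 + s) * p \<le> 2 * (p - F)" using ps by (simp add: algebra_simps)
        hence "p \<le> 2 / (1 + s) * (p - F)" using s0 by (simp add: field_simps)
        hence "p * vb \<le> (2 / (1 + s) * (p - F)) * vb" using vbpos by (intro mult_right_mono) auto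
        thus ?thesis by (simp only: ac_simps)
      qed
      hence "vb \<le> 2 / (1 + s) * ((p - F) * vb) / p" by (simp only: pos_le_divide_eq[OF p])
      thus ?thesis using gvb by simp
    qed
  qed
  show ?thesis using goal L unfolding g_def s_def by simp
qed

theorem lemma14:
  fixes \<Delta> m M \<pi> :: real and T :: nat and p :: "nat \<Rightarrow> real" and f :: "nat \<Rightarrow> real \<Rightarrow> real"
  assumes "\<Delta> > 0" and "0 < m" and "m \<le> M" and "\<pi> \<ge> 1"
    and "\<forall>s\<in>{1..T}. in_GPE \<Delta> m M (p s) (f s)"
    and "t \<in> {1..T}"
  shows "cr_pursuit \<Delta> \<pi> (\<lambda>s. gPE (p s) (f s)) t
     \<le> (2 / (1 + sqrt (1 - 1 / \<pi>))) *
        gPE (p t) (f t) (cr_pursuit \<Delta> \<pi> (\<lambda>s. gPE (p s) (f s)) t) / p t"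
proof -
  define g where "g = (\<lambda>s. gPE (p s) (f s))"
  obtain k where k: "t = Suc k" using assms(6) by (cases t) auto
  have G: "in_GPE \<Delta> m M (p t) (f t)" using assms(5,6) by auto
  have pt: "p t > 0" using G assms(2) by (simp add: in_GPE_def)
  have contf: "continuous_on {0..\<Delta>} (f t)"
    using G differentiable_imp_continuous_on by (auto simp: in_GPE_def)
  have gc: "continuous_on {0..\<Delta>} (g t)" unfolding g_def gPE_def
    by (intro continuous_intros contf)
  obtain z0 where z0: "z0 \<in> {0..\<Delta>}" "\<forall>y\<in>{0..\<Delta>}. g t y \<le> g t z0"
    using continuous_attains_sup[OF _ _ gc] assms(1) by auto
  have bnd: "\<forall>s\<in>{1..n}. \<forall>x\<in>{0..\<Delta>}. g s x \<le> M * x" if "n \<le> T" for n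
  proof (intro ballI)
    fix s x assume s: "s \<in> {1..n}" and x: "x \<in> {0..\<Delta>}"
    have "in_GPE \<Delta> m M (p s) (f s)" using assms(5) s that by auto
    hence "p s \<le> M" "0 \<le> f s x" using x by (auto simp: in_GPE_def)
    thus "g s x \<le> M * x" using x by (auto simp: g_def gPE_def intro!: mult_right_mono)
  qed
  have M0: "M \<ge> 0" using assms(2,3) by simp
  have tT: "Suc k \<le> T" "k \<le> T" using assms(6) k by auto
  have e1: "eta_OPT \<Delta> g k \<le> eta_OPT \<Delta> g (Suc k)"
    by (rule eta_mono[OF _ _ bnd[OF tT(1)] M0]) (use assms(1) k in \<open>auto simp: g_def gPE_def\<close>)
  have e2: "eta_OPT \<Delta> g (Suc k) \<le> eta_OPT \<Delta> g k + g t z0"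
    by (rule eta_step[OF _ _ bnd[OF tT(2)] M0]) (use assms(1) k z0 in auto)
  define Y where "Y = (eta_OPT \<Delta> g t - eta_OPT \<Delta> g (t - 1)) / \<pi>"
  have Y0: "0 \<le> Y" using e1 k assms(4) by (simp add: Y_def)
  have piY: "\<pi> * Y \<le> gPE (p t) (f t) z0" using e2 k assms(4) by (simp add: Y_def g_def)
  have cr: "cr_pursuit \<Delta> \<pi> (\<lambda>s. gPE (p s) (f s)) t = (LEAST v. v \<in> {0..\<Delta>} \<and> gPE (p t) (f t) v = Y)"
    unfolding cr_pursuit_def Y_def g_def by simp
  show ?thesis unfolding cr
    by (rule single[OF assms(1) pt assms(4) _ contf _ _ Y0 z0(1) piY])
       (use G in \<open>auto simp: in_GPE_def\<close>)
qed

end
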